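(* Let $f:\mathbb{R}\to\mathbb{C}$ be a Lebesgue measurable function which is not zero almost everywhere, and suppose that for every $c>0$, \[ \lim_{x\to\infty} |f(x)|\, e^{c x\log x}=0 . \] Then the system $\mathcal G(f,\mathbb{R}^2)=\{M_aT_bf: a,b\in\mathbb{R}\}$ of time-frequency translates of $f$ is linearly independent.
   Context: For $a,b\in\mathbb{R}$, $M_aT_bf(x)=e^{2\pi i a x}f(x-b)$. For $\Lambda\subset\mathbb{R}^2$, $\mathcal G(f,\Lambda)=\{M_aT_bf:(a,b)\in\Lambda\}$. Measurable functions equal almost everywhere are identified. $\mathcal G(f,\Lambda)$ is called linearly independent if for every finite set $F\subset\Lambda$ and complex coefficients $c_{(a,b)}$, $(a,b)\in F$, not all zero, the function $\sum_{(a,b)\in F}c_{(a,b)}M_aT_bf$ is not zero almost everywhere. *)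

theory Defs
  imports "HOL-Analysis.Analysis"
begin

definition MT :: "real \<Rightarrow> real \<Rightarrow> (real \<Rightarrow> complex) \<Rightarrow> real \<Rightarrow> complex" where
  "MT a b f x = exp (2 * pi * \<i> * complex_of_real (a * x)) * f (x - b)"

definition gabor_lin_indep :: "(real \<Rightarrow> complex) \<Rightarrow> (real \<times> real) set \<Rightarrow> bool" where
  "gabor_lin_indep f \<Lambda> \<longleftrightarrow>
     (\<forall>F c. finite F \<and> F \<subseteq> \<Lambda> \<and> (\<exists>p\<in>F. c p \<noteq> (0::complex)) \<longrightarrow>
        \<not> (AE x in lebesgue. (\<Sum>p\<in>F. c p * MT (fst p) (snd p) f x) = 0))"

end

theory Submission
  imports Defs
begin


definition tp :: "'i set \<Rightarrow> ('i \<Rightarrow> real) \<Rightarrow> ('i \<Rightarrow> complex) \<Rightarrow> real \<Rightarrow> complex" where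
  "tp I w co y = (\<Sum>i\<in>I. co i * exp (\<i> * complex_of_real (w i * y)))"

lemma exp_term_deriv:
  "((\<lambda>y. exp (\<i> * complex_of_real (w * y))) has_vector_derivative
      (\<i> * complex_of_real w * exp (\<i> * complex_of_real (w * y)))) (at y within S)"
proof -
  have "((\<lambda>z. exp (\<i> * complex_of_real w * z)) has_field_derivative
      (\<i> * complex_of_real w * exp (\<i> * complex_of_real w * complex_of_real y))) (at (complex_of_real y))"
    by (auto intro!: derivative_eq_intros)
  from has_vector_derivative_real_field[OF this, of S] show ?thesis
    by (simp add: mult.assoc)
qed

lemma tp_deriv:
  "(tp I w co has_vector_derivative tp I w (\<lambda>i. co i * \<i> * complex_of_real (w i)) y) (at y within S)"
  unfolding tp_def
  apply (rule has_vector_derivative_sum)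
  using has_vector_derivative_mult_right[OF exp_term_deriv]
  by (simp add: mult.assoc)

lemma tp_cont: "continuous_on S (tp I w co)"
  unfolding tp_def by (intro continuous_intros)

lemma tp_norm_le: "norm (tp I w co y) \<le> (\<Sum>i\<in>I. norm (co i))"
  unfolding tp_def
  by (rule order_trans[OF norm_sum]) (simp add: norm_mult)



lemma vd_bound:
  fixes f :: "real \<Rightarrow> complex"
  assumes d: "\<And>t. t \<in> {a..b} \<Longrightarrow> (f has_vector_derivative f' t) (at t)"
    and bd: "\<And>t. t \<in> {a..b} \<Longrightarrow> norm (f' t) \<le> B"
    and x: "x \<in> {a..b}" and y: "y \<in> {a..b}"
  shows "norm (f x - f y) \<le> B * \<bar>x - y\<bar>"
proof -
  have "norm (f x - f y) \<le> B * norm (x - y)"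
  proof (rule differentiable_bound[where S="{a..b}" and f'="\<lambda>t h. h *\<^sub>R f' t"])
    show "convex {a..b}" by simp
    fix t assume t: "t \<in> {a..b}"
    show "(f has_derivative (\<lambda>h. h *\<^sub>R f' t)) (at t within {a..b})"
      using d[OF t] unfolding has_vector_derivative_def
      by (rule has_derivative_at_withinI)
    have "onorm (\<lambda>h::real. h *\<^sub>R f' t) = onorm (\<lambda>h::real. h) * norm (f' t)"
      by (rule onorm_scaleR_left) (rule bounded_linear_ident)
    also have "\<dots> = norm (f' t)" using onorm_id[where 'a=real] by (simp add: id_def)
    finally show "onorm (\<lambda>h::real. h *\<^sub>R f' t) \<le> B" using bd[OF t] by simp
  qed (use x y in auto)
  then show ?thesis by simp
qed

lemma piece:
  fixes Q Q1 Q2 :: "real \<Rightarrow> complex"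
  assumes d1: "\<And>t. (Q has_vector_derivative Q1 t) (at t)"
    and d2: "\<And>t. (Q1 has_vector_derivative Q2 t) (at t)"
    and b: "\<And>t. norm (Q2 t) \<le> \<Lambda>" and L: "\<Lambda> > 0" and dl: "\<delta> > 0"
    and q0: "norm (Q1 y0) \<ge> \<delta>" and yy: "\<bar>y - y0\<bar> \<le> \<delta> / (2 * \<Lambda>)"
    and qy: "norm (Q y) < \<epsilon>" and qy0: "norm (Q y0) < \<epsilon>"
  shows "\<bar>y - y0\<bar> \<le> 4 * \<epsilon> / \<delta>"
proof -
  define lo where "lo = min y y0"
  define hi where "hi = max y y0"
  have y: "y \<in> {lo..hi}" and y0: "y0 \<in> {lo..hi}" unfolding lo_def hi_def by auto
  have close: "norm (Q1 t - Q1 y0) \<le> \<delta> / 2" if t: "t \<in> {lo..hi}" for t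
  proof -
    have "norm (Q1 t - Q1 y0) \<le> \<Lambda> * \<bar>t - y0\<bar>"
      by (rule vd_bound[OF d2 b t y0])
    also have "\<bar>t - y0\<bar> \<le> \<bar>y - y0\<bar>" using t unfolding lo_def hi_def by auto
    then have "\<Lambda> * \<bar>t - y0\<bar> \<le> \<Lambda> * (\<delta> / (2 * \<Lambda>))"
      using yy L by (intro mult_left_mono) auto
    also have "\<dots> = \<delta> / 2" using L by simp
    finally show ?thesis by simp
  qed
  define R where "R t = Q t - complex_of_real t * Q1 y0" for t
  have dR: "(R has_vector_derivative (Q1 t - Q1 y0)) (at t)" for t
    unfolding R_def
    by (rule has_vector_derivative_diff[OF d1])
       (use has_vector_derivative_real_field[of "\<lambda>z. z * Q1 y0" "Q1 y0" t UNIV] in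
         \<open>auto intro!: derivative_eq_intros\<close>)
  have n1: "norm (R y - R y0) \<le> (\<delta> / 2) * \<bar>y - y0\<bar>"
    by (rule vd_bound[OF dR close y y0])
  have "R y - R y0 = (Q y - Q y0) - complex_of_real (y - y0) * Q1 y0"
    unfolding R_def by (simp add: algebra_simps)
  then have "complex_of_real (y - y0) * Q1 y0 = (Q y - Q y0) - (R y - R y0)" by simp
  then have "norm (complex_of_real (y - y0) * Q1 y0) \<le> norm (Q y - Q y0) + (\<delta> / 2) * \<bar>y - y0\<bar>"
    using norm_triangle_ineq4[of "Q y - Q y0" "R y - R y0"] n1 by simp
  moreover have "norm (complex_of_real (y - y0) * Q1 y0) = \<bar>y - y0\<bar> * norm (Q1 y0)"
    by (simp add: norm_mult del: of_real_diff)
  moreover have "\<bar>y - y0\<bar> * \<delta> \<le> \<bar>y - y0\<bar> * norm (Q1 y0)"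
    using q0 by (intro mult_left_mono) auto
  moreover have "norm (Q y - Q y0) \<le> 2 * \<epsilon>"
    using qy qy0 norm_triangle_ineq4[of "Q y" "Q y0"] by linarith
  moreover have "\<delta> / 2 * \<bar>y - y0\<bar> = (\<bar>y - y0\<bar> * \<delta>) / 2" by simp
  ultimately have "\<bar>y - y0\<bar> * \<delta> \<le> 4 * \<epsilon>" by linarith
  then show ?thesis using dl by (simp add: field_simps)
qed



lemma meas_lt:
  fixes g :: "real \<Rightarrow> complex"
  assumes "continuous_on UNIV g"
  shows "{y. norm (g y) < e} \<in> sets lborel"
proof -
  have "open {y. norm (g y) < e}"
    by (rule open_Collect_less) (intro continuous_intros assms)+
  then show ?thesis by simp
qed

lemma meas_ge:
  fixes g :: "real \<Rightarrow> complex"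
  assumes "continuous_on UNIV g"
  shows "{y. e \<le> norm (g y)} \<in> sets lborel"
proof -
  have "closed {y. e \<le> norm (g y)}"
    by (rule closed_Collect_le) (intro continuous_intros assms)+
  then show ?thesis by simp
qed

lemma meas_sub:
  fixes g :: "real \<Rightarrow> complex"
  assumes "continuous_on UNIV g"
  shows "{y\<in>{l..u}. norm (g y) < e} \<in> sets lborel"
proof -
  have "{y\<in>{l..u}. norm (g y) < e} = {l..u} \<inter> {y. norm (g y) < e}" by auto
  then show ?thesis using meas_lt[OF assms, of e] by simp
qed

lemma measure_Icc_le:
  assumes "S \<subseteq> {l..u}" "S \<in> sets lborel" "l \<le> u"
  shows "measure lborel S \<le> u - l"
proof -
  have "measure lborel S \<le> measure lborel {l..u}"
    by (rule measure_mono_fmeasurable[OF assms(1,2)]) (simp add: fmeasurable_compact)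
  also have "\<dots> = u - l" using assms(3) by (simp add: measure_def)
  finally show ?thesis .
qed

lemma tp_split:
  assumes "finite I" "i1 \<in> I"
  shows "tp I w co y = exp (\<i> * complex_of_real (w i1 * y)) *
           (co i1 + tp (I - {i1}) (\<lambda>i. w i - w i1) co y)"
proof -
  have e: "exp (\<i> * complex_of_real (w i * y)) =
      exp (\<i> * complex_of_real (w i1 * y)) * exp (\<i> * complex_of_real ((w i - w i1) * y))" for i
    by (simp add: exp_add[symmetric] algebra_simps)
  have "(\<Sum>i\<in>I-{i1}. co i * exp (\<i> * complex_of_real (w i * y))) =
     (\<Sum>i\<in>I-{i1}. exp (\<i> * complex_of_real (w i1 * y)) * (co i * exp (\<i> * complex_of_real ((w i - w i1) * y))))"
  proof (rule sum.cong[OF refl])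
    fix i show "co i * exp (\<i> * complex_of_real (w i * y)) =
      exp (\<i> * complex_of_real (w i1 * y)) * (co i * exp (\<i> * complex_of_real ((w i - w i1) * y)))"
      by (simp only: e[of i]) (simp add: mult_ac)
  qed
  then show ?thesis
    unfolding tp_def sum.remove[OF assms] distrib_left sum_distrib_left[symmetric]
    by (simp add: mult_ac)
qed



lemma sublevel:
  assumes "finite I" "I \<noteq> {}" "inj_on w I" "\<forall>i\<in>I. co i \<noteq> 0"
  shows "\<exists>C \<alpha>. 0 < \<alpha> \<and> 0 \<le> C \<and> (\<forall>a \<epsilon>. 0 < \<epsilon> \<longrightarrow> \<epsilon> \<le> 1 \<longrightarrow>
           measure lborel {y\<in>{a..a+1}. norm (tp I w co y) < \<epsilon>} \<le> C * \<epsilon> powr \<alpha>)"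
  using assms
proof (induction "card I" arbitrary: I w co rule: less_induct)
  case less
  obtain i1 where i1: "i1 \<in> I" using less.prems by auto
  show ?case
  proof (cases "I = {i1}")
    case True
    define r where "r = norm (co i1)"
    have r: "r > 0" using less.prems i1 unfolding r_def by auto
    have nt: "norm (tp I w co y) = r" for y
      unfolding tp_def True r_def by (simp add: norm_mult)
    show ?thesis
    proof (intro exI conjI allI impI)
      fix a \<epsilon> :: real assume e: "0 < \<epsilon>" "\<epsilon> \<le> 1"
      show "measure lborel {y\<in>{a..a+1}. norm (tp I w co y) < \<epsilon>} \<le> 1 / r * \<epsilon> powr 1"
      proof (cases "\<epsilon> \<le> r")
        case True
        have E: "{y\<in>{a..a+1}. norm (tp I w co y) < \<epsilon>} = {}" using nt True by auto
        show ?thesis by (subst E) (use r e in simp)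
      next
        case False
        have "measure lborel {y\<in>{a..a+1}. norm (tp I w co y) < \<epsilon>} \<le> (a + 1) - a"
          by (rule measure_Icc_le[OF _ meas_sub[OF tp_cont]]) auto
        also have "\<dots> \<le> 1 / r * \<epsilon> powr 1" using False r e by (simp add: field_simps)
        finally show ?thesis .
      qed
    qed (use r in auto)
  next
    case False
    define I' where "I' = I - {i1}"
    have I'ne: "I' \<noteq> {}" using False i1 unfolding I'_def by auto
    have finI': "finite I'" using less.prems unfolding I'_def by auto
    have cardI': "card I' < card I" using less.prems i1 unfolding I'_def by (simp add: card_gt_0_iff)
    define v where "v i = w i - w i1" for i
    define co1 where "co1 i = co i * \<i> * complex_of_real (v i)" for i
    define co2 where "co2 i = co1 i * \<i> * complex_of_real (v i)" for i
    define Q where "Q y = co i1 + tp I' v co y" for y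
    define Q1 where "Q1 = tp I' v co1"
    define Q2 where "Q2 = tp I' v co2"
    define \<Lambda> where "\<Lambda> = (\<Sum>i\<in>I'. norm (co2 i)) + 1"
    have L: "\<Lambda> > 0" unfolding \<Lambda>_def by (smt (verit) sum_nonneg norm_ge_zero)
    have dQ: "(Q has_vector_derivative Q1 t) (at t)" for t
    proof -
      have "((\<lambda>y. co i1 + tp I' v co y) has_vector_derivative (0 + Q1 t)) (at t)"
        unfolding Q1_def co1_def
        by (intro has_vector_derivative_add has_vector_derivative_const tp_deriv)
      then show ?thesis unfolding Q_def[abs_def] by simp
    qed
    have dQ1: "(Q1 has_vector_derivative Q2 t) (at t)" for t
      unfolding Q1_def Q2_def co2_def by (rule tp_deriv)
    have bQ2: "norm (Q2 t) \<le> \<Lambda>" for t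
      unfolding Q2_def \<Lambda>_def using tp_norm_le[of I' v co2 t] by linarith
    have injv: "inj_on v I'" using less.prems(3) unfolding inj_on_def v_def I'_def by auto
    have co1nz: "\<forall>i\<in>I'. co1 i \<noteq> 0"
    proof
      fix i assume i: "i \<in> I'"
      then have "w i \<noteq> w i1" using less.prems(3) i1 unfolding I'_def inj_on_def by auto
      then show "co1 i \<noteq> 0" using less.prems(4) i unfolding co1_def v_def I'_def by auto
    qed
    obtain C1 \<alpha>1 where a1: "0 < \<alpha>1" "0 \<le> C1" and
      IH: "\<And>a \<epsilon>. 0 < \<epsilon> \<Longrightarrow> \<epsilon> \<le> 1 \<Longrightarrow>
           measure lborel {y\<in>{a..a+1}. norm (Q1 y) < \<epsilon>} \<le> C1 * \<epsilon> powr \<alpha>1"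
      using less.hyps[OF cardI' finI' I'ne injv co1nz] unfolding Q1_def by blast
    have nQ: "norm (tp I w co y) = norm (Q y)" for y
      unfolding Q_def I'_def v_def tp_split[OF less.prems(1) i1, of w co y]
      by (simp add: norm_mult)
    have contQ: "continuous_on UNIV Q" unfolding Q_def[abs_def] by (intro continuous_intros tp_cont)
    have contQ1: "continuous_on UNIV Q1" unfolding Q1_def by (rule tp_cont)
    define \<alpha> where "\<alpha> = min \<alpha>1 1 / 3"
    define C where "C = C1 + 16 * \<Lambda> + 16"
    show ?thesis
    proof (intro exI conjI allI impI)
      show "0 < \<alpha>" using a1 unfolding \<alpha>_def by simp
      show "0 \<le> C" using a1 L unfolding C_def by simp
      fix a \<epsilon> :: real assume e: "0 < \<epsilon>" "\<epsilon> \<le> 1"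
      define \<delta> where "\<delta> = \<epsilon> powr (1/3)"
      have d: "0 < \<delta>" "\<delta> \<le> 1" unfolding \<delta>_def using e by (auto simp: powr_le1)
      have e3: "\<epsilon> = \<delta> ^ 3"
        unfolding \<delta>_def using e by (simp add: powr_realpow[symmetric] powr_powr)
      define \<rho> where "\<rho> = \<delta> / (2 * \<Lambda>)"
      have rho: "\<rho> > 0" unfolding \<rho>_def using d L by simp
      define M where "M = nat \<lceil>1 / \<rho>\<rceil> + 1"
      define T where "T k = {y\<in>{a + real k * \<rho> .. a + real (Suc k) * \<rho>}. norm (Q y) < \<epsilon> \<and> \<delta> \<le> norm (Q1 y)}" for k
      define S where "S = {y\<in>{a..a+1}. norm (tp I w co y) < \<epsilon>}"
      define S1 where "S1 = {y\<in>{a..a+1}. norm (Q1 y) < \<delta>}"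
      have Tmeas: "T k \<in> sets lborel" for k
      proof -
        have "T k = {a + real k * \<rho> .. a + real (Suc k) * \<rho>} \<inter> {y. norm (Q y) < \<epsilon>} \<inter> {y. \<delta> \<le> norm (Q1 y)}"
          unfolding T_def by auto
        then show ?thesis using meas_lt[OF contQ] meas_ge[OF contQ1] by simp
      qed
      have S1meas: "S1 \<in> sets lborel"
      proof -
        have "S1 = {a..a+1} \<inter> {y. norm (Q1 y) < \<delta>}" unfolding S1_def by auto
        then show ?thesis using meas_lt[OF contQ1] by simp
      qed
      have cover: "S \<subseteq> S1 \<union> (\<Union>k<M. T k)"
      proof
        fix y assume y: "y \<in> S"
        show "y \<in> S1 \<union> (\<Union>k<M. T k)"
        proof (cases "norm (Q1 y) < \<delta>")
          case True then show ?thesis using y unfolding S_def S1_def by auto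
        next
          case False
          define k where "k = nat \<lfloor>(y - a) / \<rho>\<rfloor>"
          have ya: "0 \<le> y - a" "y - a \<le> 1" using y unfolding S_def by auto
          have fl0: "0 \<le> \<lfloor>(y - a) / \<rho>\<rfloor>" using ya rho by simp
          have k1: "real k \<le> (y - a) / \<rho>" unfolding k_def using fl0 by linarith
          have k2: "(y - a) / \<rho> < real k + 1" unfolding k_def using fl0 by linarith
          have "a + real k * \<rho> \<le> y" using k1 rho by (simp add: field_simps)
          moreover have "y \<le> a + real (Suc k) * \<rho>" using k2 rho by (simp add: field_simps)
          moreover have "k < M"
          proof -
            have "(y - a) / \<rho> \<le> 1 / \<rho>" using ya rho by (simp add: divide_right_mono)
            then have "\<lfloor>(y - a) / \<rho>\<rfloor> \<le> \<lceil>1 / \<rho>\<rceil>" by linarith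
            then show ?thesis unfolding k_def M_def by linarith
          qed
          ultimately have "y \<in> T k" using y False nQ unfolding T_def S_def by auto
          then show ?thesis using \<open>k < M\<close> by auto
        qed
      qed
      have Tbound: "measure lborel (T k) \<le> 8 * \<epsilon> / \<delta>" for k
      proof (cases "T k = {}")
        case True then show ?thesis using e d by simp
      next
        case False
        then obtain y0 where y0: "y0 \<in> T k" by auto
        have "T k \<subseteq> {y0 - 4 * \<epsilon> / \<delta> .. y0 + 4 * \<epsilon> / \<delta>}"
        proof
          fix y assume y: "y \<in> T k"
          have "\<bar>y - y0\<bar> \<le> \<rho>"
            using y y0 unfolding T_def by (auto simp: algebra_simps abs_if)
          then have "\<bar>y - y0\<bar> \<le> 4 * \<epsilon> / \<delta>"
            using piece[OF dQ dQ1 bQ2 L d(1), of y0 y \<epsilon>] y y0 unfolding T_def \<rho>_def by auto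
          then show "y \<in> {y0 - 4 * \<epsilon> / \<delta> .. y0 + 4 * \<epsilon> / \<delta>}" by auto
        qed
        from measure_Icc_le[OF this Tmeas] e d show ?thesis by simp
      qed
      have "measure lborel S \<le> measure lborel S1 + measure lborel (\<Union>k<M. T k)"
      proof -
        have Smeas: "S \<in> sets lborel" unfolding S_def by (rule meas_sub[OF tp_cont])
        have sub: "S1 \<union> (\<Union>k<M. T k) \<subseteq> {a .. a + 1 + real M * \<rho>}"
        proof
          fix y assume "y \<in> S1 \<union> (\<Union>k<M. T k)"
          then show "y \<in> {a .. a + 1 + real M * \<rho>}"
          proof
            assume "y \<in> S1"
            moreover have "0 \<le> real M * \<rho>" using rho by simp
            ultimately show ?thesis unfolding S1_def by auto
          next
            assume "y \<in> (\<Union>k<M. T k)"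
            then obtain k where k: "k < M" "y \<in> T k" by auto
            have "real (Suc k) * \<rho> \<le> real M * \<rho>" using k rho by (intro mult_right_mono) auto
            moreover have "0 \<le> real k * \<rho>" using rho by simp
            ultimately show ?thesis using k unfolding T_def by auto
          qed
        qed
        have Ufm: "S1 \<union> (\<Union>k<M. T k) \<in> fmeasurable lborel"
          by (rule fmeasurableI2[OF fmeasurable_compact[of "{a .. a + 1 + real M * \<rho>}"] sub])
             (use S1meas Tmeas in \<open>auto intro!: sets.Un sets.finite_UN\<close>)
        have "measure lborel S \<le> measure lborel (S1 \<union> (\<Union>k<M. T k))"
          by (rule measure_mono_fmeasurable[OF cover Smeas Ufm])
        also have "\<dots> \<le> measure lborel S1 + measure lborel (\<Union>k<M. T k)"
          by (rule measure_Un_le) (use S1meas Tmeas in \<open>auto intro!: sets.finite_UN\<close>)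
        finally show ?thesis .
      qed
      also have "measure lborel (\<Union>k<M. T k) \<le> (\<Sum>k<M. measure lborel (T k))"
        by (rule measure_UNION_le) (use Tmeas in auto)
      also have "(\<Sum>k<M. measure lborel (T k)) \<le> real M * (8 * \<epsilon> / \<delta>)"
        using sum_mono[of "{..<M}" "\<lambda>k. measure lborel (T k)" "\<lambda>k. 8 * \<epsilon> / \<delta>"] Tbound by simp
      also have "measure lborel S1 \<le> C1 * \<delta> powr \<alpha>1"
        unfolding S1_def by (rule IH[OF d])
      finally have m1: "measure lborel S \<le> C1 * \<delta> powr \<alpha>1 + real M * (8 * \<epsilon> / \<delta>)" by simp
      have "real M \<le> 2 * \<Lambda> / \<delta> + 2"
      proof -
        have "real M = real (nat \<lceil>1 / \<rho>\<rceil>) + 1" unfolding M_def by simp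
        also have "real (nat \<lceil>1 / \<rho>\<rceil>) \<le> 1 / \<rho> + 1"
        proof -
          have "0 < 1 / \<rho>" using rho by simp
          then have c0: "0 \<le> \<lceil>1 / \<rho>\<rceil>" using ceiling_le_zero[of "1/\<rho>"] by linarith
          have "real (nat \<lceil>1 / \<rho>\<rceil>) = of_int \<lceil>1 / \<rho>\<rceil>" by (rule of_nat_nat[OF c0])
          also have "\<dots> \<le> 1 / \<rho> + 1" using ceiling_correct[of "1/\<rho>"] by linarith
          finally show ?thesis .
        qed
        finally show ?thesis unfolding \<rho>_def using d L by simp
      qed
      then have "real M * (8 * \<epsilon> / \<delta>) \<le> (2 * \<Lambda> / \<delta> + 2) * (8 * \<epsilon> / \<delta>)"
        using e d by (intro mult_right_mono) auto
      also have "\<dots> = 16 * \<Lambda> * \<delta> + 16 * \<delta>^2"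
        using d unfolding e3 by (simp add: field_simps power3_eq_cube power2_eq_square)
      also have "\<dots> \<le> (16 * \<Lambda> + 16) * \<delta>"
        using d L by (simp add: power2_eq_square algebra_simps mult_left_le)
      finally have m2: "real M * (8 * \<epsilon> / \<delta>) \<le> (16 * \<Lambda> + 16) * \<delta>" .
      have p1: "\<delta> \<le> \<epsilon> powr \<alpha>"
        unfolding \<delta>_def using e by (intro powr_mono') (auto simp: \<alpha>_def)
      have p2: "\<delta> powr \<alpha>1 \<le> \<epsilon> powr \<alpha>"
        unfolding \<delta>_def using e a1 by (simp add: powr_powr) (intro powr_mono', auto simp: \<alpha>_def)
      have "measure lborel S \<le> C1 * \<epsilon> powr \<alpha> + (16 * \<Lambda> + 16) * \<epsilon> powr \<alpha>"
        using m1 m2 mult_left_mono[OF p2 a1(2)] mult_left_mono[OF p1, of "16 * \<Lambda> + 16"] L by linarith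
      then show "measure lborel {y\<in>{a..a+1}. norm (tp I w co y) < \<epsilon>} \<le> C * \<epsilon> powr \<alpha>"
        unfolding S_def C_def by (simp add: algebra_simps)
    qed
  qed
qed



lemma chain:
  fixes g :: "real \<Rightarrow> real" and L :: "nat \<Rightarrow> real set"
  assumes Lstep: "\<And>j l d. l \<in> L j \<Longrightarrow> d \<in> D \<Longrightarrow> l + d \<in> L (Suc j)"
    and Lmono: "\<And>j. j \<le> m \<Longrightarrow> L j \<subseteq> L m"
    and H: "\<And>l M. l \<in> L m \<Longrightarrow> 0 \<le> M \<Longrightarrow> (\<forall>d\<in>D. g (l + d + y) \<le> M) \<Longrightarrow> g (l + y) \<le> q * M"
    and q: "0 \<le> q" and B: "0 \<le> B" and dm: "\<And>d. d \<in> D \<Longrightarrow> dm \<le> d"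
  shows "\<forall>j l. l \<in> L j \<longrightarrow> j + k \<le> m \<longrightarrow> (\<forall>z. l + y + real k * dm \<le> z \<longrightarrow> g z \<le> B)
           \<longrightarrow> g (l + y) \<le> q ^ k * B"
proof (induction k)
  case 0
  then show ?case by auto
next
  case (Suc k)
  show ?case
  proof (intro allI impI)
    fix j l assume l: "l \<in> L j" and jk: "j + Suc k \<le> m"
      and zb: "\<forall>z. l + y + real (Suc k) * dm \<le> z \<longrightarrow> g z \<le> B"
    have "\<forall>d\<in>D. g (l + d + y) \<le> q ^ k * B"
    proof
      fix d assume d: "d \<in> D"
      have "\<forall>z. (l + d) + y + real k * dm \<le> z \<longrightarrow> g z \<le> B"
        using zb dm[OF d] by (auto simp: algebra_simps)
      moreover have "Suc j + k \<le> m" using jk by simp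
      ultimately show "g (l + d + y) \<le> q ^ k * B"
        using Suc.IH Lstep[OF l d] by blast
    qed
    moreover have "l \<in> L m" using Lmono[of j] l jk by auto
    ultimately have "g (l + y) \<le> q * (q ^ k * B)"
      using H q B by (simp add: zero_le_mult_iff)
    then show "g (l + y) \<le> q ^ Suc k * B" by (simp add: mult.assoc)
  qed
qed

definition LS :: "real set \<Rightarrow> nat \<Rightarrow> real set" where
  "LS D m = (\<lambda>n. \<Sum>d\<in>D. real (n d) * d) ` (PiE D (\<lambda>_. {0..m}))"

lemma LS_finite: "finite D \<Longrightarrow> finite (LS D m)"
  unfolding LS_def by (intro finite_imageI finite_PiE) auto

lemma LS_card: "finite D \<Longrightarrow> card (LS D m) \<le> (Suc m) ^ card D"
proof -
  assume fD: "finite D"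
  have "card (LS D m) \<le> card (PiE D (\<lambda>_. {0..m}))"
    unfolding LS_def by (rule card_image_le) (intro finite_PiE fD, auto)
  also have "\<dots> = (Suc m) ^ card D" using fD by (simp add: card_PiE)
  finally show ?thesis .
qed

lemma LS_zero: "0 \<in> LS D m"
proof -
  have mem: "(\<lambda>d\<in>D. 0::nat) \<in> PiE D (\<lambda>_. {0..m})" by auto
  have eq: "0 = (\<Sum>d\<in>D. real ((\<lambda>d\<in>D. 0::nat) d) * d)" by simp
  show ?thesis unfolding LS_def by (rule image_eqI[where f="\<lambda>n. \<Sum>d\<in>D. real (n d) * d", OF eq mem])
qed

lemma LS_step:
  assumes fD: "finite D" and l: "l \<in> LS D j" and d: "d \<in> D"
  shows "l + d \<in> LS D (Suc j)"
proof -
  from l obtain n where n: "n \<in> PiE D (\<lambda>_. {0..j})" and ln: "l = (\<Sum>e\<in>D. real (n e) * e)"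
    unfolding LS_def by auto
  define n' where "n' = n(d := Suc (n d))"
  have mem: "n' \<in> PiE D (\<lambda>_. {0..Suc j})"
    using n d unfolding n'_def by (auto simp: PiE_def Pi_def extensional_def)
  have eq: "l + d = (\<Sum>e\<in>D. real (n' e) * e)"
  proof -
    have "(\<Sum>e\<in>D. real (n' e) * e) = real (n' d) * d + (\<Sum>e\<in>D-{d}. real (n' e) * e)"
      by (rule sum.remove[OF fD d])
    also have "(\<Sum>e\<in>D-{d}. real (n' e) * e) = (\<Sum>e\<in>D-{d}. real (n e) * e)"
      unfolding n'_def by (rule sum.cong) auto
    also have "real (n' d) * d = real (n d) * d + d" unfolding n'_def by (simp add: algebra_simps)
    finally show ?thesis unfolding ln sum.remove[OF fD d] by simp
  qed
  show ?thesis unfolding LS_def by (rule image_eqI[where f="\<lambda>n. \<Sum>d\<in>D. real (n d) * d", OF eq mem])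
qed

lemma LS_mono: "j \<le> m \<Longrightarrow> LS D j \<subseteq> LS D m"
  unfolding LS_def by (intro image_mono PiE_mono) auto

lemma LS_nonneg: "(\<And>d. d \<in> D \<Longrightarrow> 0 < d) \<Longrightarrow> l \<in> LS D m \<Longrightarrow> 0 \<le> l"
  unfolding LS_def by (auto intro!: sum_nonneg simp: less_imp_le)

lemma emeasure_transl:
  fixes S :: "real set"
  assumes "S \<in> sets borel"
  shows "emeasure lborel ((+) t -` S) = emeasure lborel S"
proof -
  have "emeasure lborel S = emeasure (distr lborel borel ((+) t)) S"
    by (subst lborel_distr_plus) (rule refl)
  also have "\<dots> = emeasure lborel ((+) t -` S \<inter> space lborel)"
    by (rule emeasure_distr) (use assms in auto)
  finally show ?thesis by simp
qed

lemma sets_transl: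
  fixes S :: "real set"
  assumes "S \<in> sets borel"
  shows "(+) t -` S \<in> sets borel"
proof -
  have "(+) t \<in> borel_measurable borel" by simp
  from measurable_sets[OF this assms] show ?thesis by simp
qed

lemma measure_transl:
  fixes S :: "real set"
  assumes "S \<in> sets borel"
  shows "measure lborel ((+) t -` S) = measure lborel S"
  unfolding measure_def using emeasure_transl[OF assms] by simp



lemma bad_null:
  fixes P :: "real \<Rightarrow> complex" and L :: "nat \<Rightarrow> real set"
  assumes cont: "continuous_on UNIV P"
    and sub: "\<And>a \<epsilon>. 0 < \<epsilon> \<Longrightarrow> \<epsilon> \<le> 1 \<Longrightarrow> measure lborel {y\<in>{a..a+1}. norm (P y) < \<epsilon>} \<le> C * \<epsilon> powr \<alpha>"
    and al: "0 < \<alpha>" and C: "0 \<le> C"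
    and Lfin: "\<And>m. finite (L m)" and Lcard: "\<And>m. card (L m) \<le> (Suc m) ^ r"
  shows "\<exists>Z\<in>null_sets lborel. \<forall>y\<in>{a..a+1} - Z. \<forall>M. \<exists>m>M.
           \<forall>l\<in>L m. exp (- ((real r + 1) / \<alpha>) * ln (real m)) \<le> norm (P (l + y))"
proof -
  define K where "K = (real r + 1) / \<alpha>"
  define \<theta> where "\<theta> m = exp (- K * ln (real m))" for m :: nat
  define Bl where "Bl m l = {y\<in>{a..a+1}. norm (P (l + y)) < \<theta> m}" for m l
  define Bad where "Bad m = (\<Union>l\<in>L m. Bl m l)" for m
  have contl: "continuous_on UNIV (\<lambda>y. P (l + y))" for l
    by (rule continuous_on_compose2[OF cont]) (auto intro: continuous_intros)
  have Blmeas: "Bl m l \<in> sets lborel" for m l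
    unfolding Bl_def by (rule meas_sub[OF contl])
  have Badmeas: "Bad m \<in> sets lborel" for m
    unfolding Bad_def using Blmeas Lfin by (auto intro!: sets.finite_UN)
  have Badsub: "Bad m \<subseteq> {a..a+1}" for m unfolding Bad_def Bl_def by auto
  have Badfm: "Bad m \<in> fmeasurable lborel" for m
    by (rule fmeasurableI2[OF fmeasurable_compact[of "{a..a+1}"] Badsub]) (use Badmeas in auto)
  have K0: "0 \<le> K" unfolding K_def using al by simp
  have th: "0 < \<theta> m" "\<theta> m \<le> 1" if "1 \<le> m" for m
    using that K0 unfolding \<theta>_def by (auto simp: mult_nonneg_nonneg)
  have thp: "\<theta> m powr \<alpha> = inverse (real m ^ (r + 1))" if "1 \<le> m" for m
  proof -
    have "\<theta> m powr \<alpha> = exp (\<alpha> * ln (\<theta> m))" using th[OF that] by (simp add: powr_def)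
    also have "\<alpha> * ln (\<theta> m) = - (real (r + 1)) * ln (real m)"
      unfolding \<theta>_def K_def using al by (simp add: field_simps)
    also have "exp (- (real (r + 1)) * ln (real m)) = exp (- (real (r + 1) * ln (real m)))" by (simp add: algebra_simps)
    also have "\<dots> = inverse (exp (real (r + 1) * ln (real m)))" by (rule exp_minus)
    also have "exp (real (r + 1) * ln (real m)) = real m powr real (r + 1)"
      using that by (simp add: powr_def)
    also have "real m powr real (r + 1) = real m ^ (r + 1)"
      using that by (intro powr_realpow) simp
    finally show ?thesis .
  qed
  have Blm: "measure lborel (Bl m l) \<le> C * inverse (real m ^ (r + 1))" if "1 \<le> m" for m l
  proof -
    define S where "S = {z\<in>{l+a..(l+a)+1}. norm (P z) < \<theta> m}"
    have "Bl m l = (+) l -` S" unfolding Bl_def S_def by auto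
    moreover have "S \<in> sets borel" unfolding S_def using meas_sub[OF cont] by simp
    ultimately have "measure lborel (Bl m l) = measure lborel S" using measure_transl by simp
    also have "\<dots> \<le> C * \<theta> m powr \<alpha>" unfolding S_def by (rule sub) (use th[OF that] in auto)
    finally show ?thesis using thp[OF that] by simp
  qed
  have Badm: "measure lborel (Bad m) \<le> C * 2 ^ r / real m" if "1 \<le> m" for m
  proof -
    have "measure lborel (Bad m) \<le> (\<Sum>l\<in>L m. measure lborel (Bl m l))"
      unfolding Bad_def by (rule measure_UNION_le) (use Lfin Blmeas in auto)
    also have "\<dots> \<le> (\<Sum>l\<in>L m. C * inverse (real m ^ (r + 1)))"
      by (rule sum_mono) (rule Blm[OF that])
    also have "\<dots> = real (card (L m)) * (C * inverse (real m ^ (r + 1)))" by simp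
    also have "\<dots> \<le> real (Suc m ^ r) * (C * inverse (real m ^ (r + 1)))"
      using Lcard[of m] C by (intro mult_right_mono) (auto simp del: of_nat_Suc)
    also have "real (Suc m ^ r) \<le> (2 * real m) ^ r"
    proof -
      have "real (Suc m ^ r) = real (Suc m) ^ r" by simp
      also have "\<dots> \<le> (2 * real m) ^ r" using that by (intro power_mono) auto
      finally show ?thesis .
    qed
    then have "real (Suc m ^ r) * (C * inverse (real m ^ (r + 1))) \<le> (2 * real m) ^ r * (C * inverse (real m ^ (r + 1)))"
      using C by (intro mult_right_mono) auto
    also have "(2 * real m) ^ r * (C * inverse (real m ^ (r + 1))) = C * 2 ^ r / real m"
      using that by (simp add: power_mult_distrib field_simps)
    finally show ?thesis .
  qed
  define Z where "Z = (\<Union>M. \<Inter>m\<in>{Suc M..}. Bad m)"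
  have Inull: "(\<Inter>m\<in>{Suc M..}. Bad m) \<in> null_sets lborel" for M
  proof -
    have meas: "(\<Inter>m\<in>{Suc M..}. Bad m) \<in> sets lborel"
      by (rule sets.countable_INT) (use Badmeas in auto)
    have fm: "(\<Inter>m\<in>{Suc M..}. Bad m) \<in> fmeasurable lborel"
      by (rule fmeasurableI2[OF Badfm[of "Suc M"]]) (use meas in auto)
    have le: "measure lborel (\<Inter>m\<in>{Suc M..}. Bad m) \<le> C * 2 ^ r / real m" if "Suc M \<le> m" for m
    proof -
      have "measure lborel (\<Inter>m\<in>{Suc M..}. Bad m) \<le> measure lborel (Bad m)"
        by (rule measure_mono_fmeasurable[OF _ meas Badfm]) (use that in auto)
      also have "\<dots> \<le> C * 2 ^ r / real m" by (rule Badm) (use that in auto)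
      finally show ?thesis .
    qed
    have "measure lborel (\<Inter>m\<in>{Suc M..}. Bad m) \<le> 0"
    proof (rule field_le_epsilon)
      fix e :: real assume e: "0 < e"
      obtain m :: nat where m: "m > C * 2 ^ r / e + real M" by (meson reals_Archimedean2)
      then have m1: "Suc M \<le> m" using C e
        by (smt (verit, ccfv_SIG) divide_nonneg_pos of_nat_less_iff of_nat_0_le_iff zero_le_mult_iff zero_le_power Suc_leI)
      have mpos: "0 < real m" using m1 by simp
      have "C * 2 ^ r / real m \<le> e"
      proof -
        have "C * 2 ^ r / e < real m" using m C e by (smt (verit) divide_nonneg_pos of_nat_0_le_iff zero_le_mult_iff zero_le_power)
        then have "C * 2 ^ r < real m * e" using e by (simp add: field_simps)
        then show ?thesis using mpos by (simp add: field_simps)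
      qed
      then show "measure lborel (\<Inter>m\<in>{Suc M..}. Bad m) \<le> 0 + e" using le[OF m1] by simp
    qed
    then have "measure lborel (\<Inter>m\<in>{Suc M..}. Bad m) = 0" using measure_nonneg[of lborel] by (meson order_antisym)
    then have "emeasure lborel (\<Inter>m\<in>{Suc M..}. Bad m) = 0" using emeasure_eq_measure2[OF fm] by simp
    then show ?thesis using meas by auto
  qed
  have Znull: "Z \<in> null_sets lborel" unfolding Z_def using Inull by auto
  show ?thesis
  proof (rule bexI[OF _ Znull], intro ballI allI)
    fix y M assume y: "y \<in> {a..a+1} - Z"
    then have "y \<notin> (\<Inter>m\<in>{Suc M..}. Bad m)" unfolding Z_def by auto
    then obtain m where m: "Suc M \<le> m" "y \<notin> Bad m" by auto
    then have "\<forall>l\<in>L m. \<theta> m \<le> norm (P (l + y))"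
      using y unfolding Bad_def Bl_def by auto
    then show "\<exists>m>M. \<forall>l\<in>L m. exp (- ((real r + 1) / \<alpha>) * ln (real m)) \<le> norm (P (l + y))"
      using m unfolding \<theta>_def K_def by (intro exI[of _ m]) auto
  qed
qed



lemma xlnx_mono:
  fixes u v :: real
  assumes "1 \<le> u" "u \<le> v"
  shows "u * ln u \<le> v * ln v"
  using assms by (intro mult_mono) auto

lemma pointwise_zero:
  fixes f :: "real \<Rightarrow> complex" and PP :: "real \<Rightarrow> complex" and L :: "nat \<Rightarrow> real set"
  assumes Lstep: "\<And>j l d. l \<in> L j \<Longrightarrow> d \<in> D \<Longrightarrow> l + d \<in> L (Suc j)"
    and Lmono: "\<And>j m. j \<le> m \<Longrightarrow> L j \<subseteq> L m"
    and L0: "\<And>m. 0 \<in> L m"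
    and rel: "\<And>m l M. l \<in> L m \<Longrightarrow> 0 \<le> M \<Longrightarrow> (\<forall>d\<in>D. norm (f (l + d + y)) \<le> M) \<Longrightarrow>
                 norm (PP (l + y)) * norm (f (l + y)) \<le> A * M"
    and inf: "\<And>M. \<exists>m>M. \<forall>l\<in>L m. exp (- K * ln (real m)) \<le> norm (PP (l + y))"
    and dec: "\<And>z. Z \<le> z \<Longrightarrow> norm (f z) \<le> exp (- (4 * (K + 1) / dm) * z * ln z)"
    and A: "0 \<le> A" and K: "0 \<le> K" and dm: "0 < dm" and dmD: "\<And>d. d \<in> D \<Longrightarrow> dm \<le> d"
  shows "f y = 0"
proof (rule ccontr)
  assume "f y \<noteq> 0"
  define \<eta> where "\<eta> = norm (f y)"
  have eta: "0 < \<eta>" unfolding \<eta>_def using \<open>f y \<noteq> 0\<close> by simp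
  define A' where "A' = A + 1"
  have A': "1 \<le> A'" unfolding A'_def using A by simp
  define c where "c = 4 * (K + 1) / dm"
  define T0 where "T0 = ln A' + 2 * (K + 1) * \<bar>ln (dm / 2)\<bar> + 1"
  define M0 where "M0 = nat \<lceil>(2 * \<bar>y\<bar> + 2 + 2 * \<bar>Z\<bar>) / dm + exp T0 + 1 / \<eta>\<rceil>"
  obtain m where mM: "m > M0" and good: "\<forall>l\<in>L m. exp (- K * ln (real m)) \<le> norm (PP (l + y))"
    using inf by blast
  have mbig: "(2 * \<bar>y\<bar> + 2 + 2 * \<bar>Z\<bar>) / dm + exp T0 + 1 / \<eta> < real m"
    using mM unfolding M0_def by linarith
  have e0: "0 \<le> exp T0" "0 \<le> 1 / \<eta>" "0 \<le> (2 * \<bar>y\<bar> + 2 + 2 * \<bar>Z\<bar>) / dm" using eta dm by auto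
  have m1: "(2 * \<bar>y\<bar> + 2 + 2 * \<bar>Z\<bar>) / dm < real m" "exp T0 < real m" "1 / \<eta> < real m"
    using mbig e0 by linarith+
  have mpos: "0 < real m" using m1(2) by (smt (verit) exp_gt_zero)
  have mdm: "2 * \<bar>y\<bar> + 2 + 2 * \<bar>Z\<bar> < real m * dm" using m1(1) dm by (simp add: field_simps)
  have lnm: "T0 \<le> ln (real m)" using m1(2) mpos
    by (metis exp_le_cancel_iff exp_ln less_imp_le)
  define \<theta> where "\<theta> = exp (- K * ln (real m))"
  have th: "0 < \<theta>" unfolding \<theta>_def by simp
  define q where "q = A' / \<theta>"
  have q: "0 \<le> q" unfolding q_def using A' th by simp
  define w where "w = y + real m * dm"
  have w2: "real m * dm / 2 \<le> w" unfolding w_def using mdm by linarith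
  have w1: "1 \<le> real m * dm / 2" "Z \<le> real m * dm / 2" using mdm by linarith+
  define B where "B = exp (- c * w * ln w)"
  have B: "0 \<le> B" unfolding B_def by simp
  have H: "norm (f (l + y)) \<le> q * M" if l: "l \<in> L m" and M: "0 \<le> M" and hd: "\<forall>d\<in>D. norm (f (l + d + y)) \<le> M" for l M
  proof -
    have "\<theta> * norm (f (l + y)) \<le> norm (PP (l + y)) * norm (f (l + y))"
      using good l unfolding \<theta>_def by (intro mult_right_mono) auto
    also have "\<dots> \<le> A * M" by (rule rel[OF l M hd])
    also have "\<dots> \<le> A' * M" unfolding A'_def using M by (simp add: algebra_simps)
    finally have "\<theta> * norm (f (l + y)) \<le> A' * M" .
    then show ?thesis unfolding q_def using th by (simp add: field_simps)
  qed
  have zb: "\<forall>z. 0 + y + real m * dm \<le> z \<longrightarrow> norm (f z) \<le> B"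
  proof (intro allI impI)
    fix z assume z: "0 + y + real m * dm \<le> z"
    then have zw: "w \<le> z" unfolding w_def by simp
    have w1': "1 \<le> w" "Z \<le> w" using w1 w2 by linarith+
    have "norm (f z) \<le> exp (- c * z * ln z)" unfolding c_def using dec[of z] zw w1' by simp
    also have "\<dots> \<le> B" unfolding B_def
    proof -
      have "w * ln w \<le> z * ln z" by (rule xlnx_mono) (use w1' zw in auto)
      moreover have "0 \<le> c" unfolding c_def using K dm by simp
      ultimately have "c * (w * ln w) \<le> c * (z * ln z)" by (intro mult_left_mono)
      then show "exp (- c * z * ln z) \<le> exp (- c * w * ln w)" by (simp add: mult.assoc)
    qed
    finally show "norm (f z) \<le> B" .
  qed
  have chn: "\<forall>j l. l \<in> L j \<longrightarrow> j + m \<le> m \<longrightarrow> (\<forall>z. l + y + real m * dm \<le> z \<longrightarrow> norm (f z) \<le> B)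
           \<longrightarrow> norm (f (l + y)) \<le> q ^ m * B"
    by (rule chain[where g="\<lambda>z. norm (f z)" and L=L and D=D and m=m and y=y and q=q and B=B and dm=dm and k=m, OF Lstep Lmono H q B dmD])
  have ch: "norm (f (0 + y)) \<le> q ^ m * B"
    using chn L0[of 0] zb by force
  have qm: "q ^ m = exp (real m * (ln A' + K * ln (real m)))"
  proof -
    have "q = exp (ln A' + K * ln (real m))"
      unfolding q_def \<theta>_def using A' by (simp add: exp_add exp_minus field_simps)
    then show ?thesis by (simp add: exp_of_nat_mult)
  qed
  have key: "real m * (ln A' + K * ln (real m)) - c * w * ln w \<le> - real m"
  proof -
    have xl: "(real m * dm / 2) * ln (real m * dm / 2) \<le> w * ln w" by (rule xlnx_mono[OF w1(1) w2])
    have lneq: "ln (real m * dm / 2) = ln (real m) + ln (dm / 2)"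
    proof -
      have "real m * dm / 2 = real m * (dm / 2)" by simp
      then show ?thesis using mpos dm by (simp only: ln_mult) (simp add: ln_mult)
    qed
    have ceq: "c * (real m * dm / 2) = 2 * (K + 1) * real m" unfolding c_def using dm by simp
    have c0: "0 \<le> c" unfolding c_def using K dm by simp
    have "2 * (K + 1) * real m * (ln (real m) + ln (dm / 2)) = (c * (real m * dm / 2)) * ln (real m * dm / 2)"
      unfolding ceq lneq by simp
    also have "\<dots> = c * ((real m * dm / 2) * ln (real m * dm / 2))" by (simp only: mult.assoc)
    also have "\<dots> \<le> c * (w * ln w)" by (rule mult_left_mono[OF xl c0])
    also have "\<dots> = c * w * ln w" by (simp only: mult.assoc)
    finally have cw: "2 * (K + 1) * real m * (ln (real m) + ln (dm / 2)) \<le> c * w * ln w" .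
    have "ln A' - (K + 2) * ln (real m) - 2 * (K + 1) * ln (dm / 2) \<le> -1"
    proof -
      have h1: "(K + 1) * (- ln (dm / 2)) \<le> (K + 1) * \<bar>ln (dm / 2)\<bar>"
        by (rule mult_left_mono) (use K in auto)
      have lnA: "0 \<le> ln A'" using A' by simp
      have h0: "0 \<le> 2 * (K + 1) * \<bar>ln (dm / 2)\<bar>" using K by simp
      have lm0: "0 \<le> ln (real m)" using lnm lnA h0 unfolding T0_def by linarith
      have h2: "0 \<le> (K + 1) * ln (real m)" using K lm0 by simp
      have e1: "(K + 2) * ln (real m) = (K + 1) * ln (real m) + ln (real m)" by (simp add: algebra_simps)
      have e2: "2 * (K + 1) * ln (dm / 2) = 2 * ((K + 1) * ln (dm / 2))" by simp
      have e3: "2 * (K + 1) * \<bar>ln (dm / 2)\<bar> = 2 * ((K + 1) * \<bar>ln (dm / 2)\<bar>)" by simp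
      have e4: "(K + 1) * (- ln (dm / 2)) = - ((K + 1) * ln (dm / 2))" by simp
      show ?thesis using lnm h1 h2 e1 e2 e3 e4 unfolding T0_def by linarith
    qed
    then have "real m * (ln A' - (K + 2) * ln (real m) - 2 * (K + 1) * ln (dm / 2)) \<le> real m * (-1)"
      using mpos by (intro mult_left_mono) auto
    then show ?thesis using cw by (simp add: algebra_simps)
  qed
  have s1: "\<eta> \<le> q ^ m * B" using ch unfolding \<eta>_def by simp
  have s2: "q ^ m * B = exp (real m * (ln A' + K * ln (real m)) - c * w * ln w)"
    unfolding qm B_def by (simp add: exp_diff exp_minus field_simps)
  have s3: "exp (real m * (ln A' + K * ln (real m)) - c * w * ln w) \<le> exp (- real m)" using key by simp
  have s4: "exp (- real m) < 1 / real m"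
  proof -
    have "real m < exp (real m)" using exp_ge_add_one_self[of "real m"] by linarith
    then show ?thesis using mpos by (simp add: exp_minus field_simps)
  qed
  have s5: "1 / real m < \<eta>" using m1(3) eta mpos by (simp add: field_simps)
  show False using s1 s2 s3 s4 s5 by linarith
qed



theorem theorem1p1:
  fixes f :: "real \<Rightarrow> complex"
  assumes "f \<in> borel_measurable lebesgue"
    and "\<not> (AE x in lebesgue. f x = 0)"
    and "\<And>c::real. c > 0 \<Longrightarrow>
           ((\<lambda>x. norm (f x) * exp (c * x * ln x)) \<longlongrightarrow> 0) at_top"
  shows "gabor_lin_indep f UNIV"
proof (rule ccontr)
  note nz = assms(2) and decay = assms(3)
  assume "\<not> gabor_lin_indep f UNIV"
  then obtain F c where fin: "finite F" and nzc: "\<exists>p\<in>F. c p \<noteq> 0"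
    and rel0: "AE x in lebesgue. (\<Sum>p\<in>F. c p * MT (fst p) (snd p) f x) = 0"
    unfolding gabor_lin_indep_def by blast
  define F' where "F' = {p\<in>F. c p \<noteq> 0}"
  have finF': "finite F'" unfolding F'_def using fin by simp
  have F'ne: "F' \<noteq> {}" unfolding F'_def using nzc by auto
  have sumF': "(\<Sum>p\<in>F. c p * MT (fst p) (snd p) f x) = (\<Sum>p\<in>F'. c p * MT (fst p) (snd p) f x)" for x
    by (rule sum.mono_neutral_right) (auto simp: F'_def fin)
  have rel: "AE x in lborel. (\<Sum>p\<in>F'. c p * MT (fst p) (snd p) f x) = 0"
    using rel0 unfolding AE_completion_iff sumF' .
  define \<beta> where "\<beta> = Max (snd ` F')"
  define F0 where "F0 = {p\<in>F'. snd p = \<beta>}"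
  define F1 where "F1 = {p\<in>F'. snd p \<noteq> \<beta>}"
  have Fsplit: "F' = F0 \<union> F1" "F0 \<inter> F1 = {}" unfolding F0_def F1_def by auto
  have finF0: "finite F0" "finite F1" unfolding F0_def F1_def using finF' by auto
  have F0ne: "F0 \<noteq> {}"
  proof -
    have "\<beta> \<in> snd ` F'" unfolding \<beta>_def using finF' F'ne by (intro Max_in) auto
    then show ?thesis unfolding F0_def by auto
  qed
  have F1lt: "snd p < \<beta>" if "p \<in> F1" for p
  proof -
    have "snd p \<le> \<beta>" unfolding \<beta>_def using that finF' unfolding F1_def by (intro Max_ge) auto
    then show ?thesis using that unfolding F1_def by auto
  qed
  define D where "D = (\<lambda>p. \<beta> - snd p) ` F1"
  have finD: "finite D" unfolding D_def using finF0 by simp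
  have Dpos: "\<And>d. d \<in> D \<Longrightarrow> 0 < d" unfolding D_def using F1lt by auto
  define dm where "dm = (if D = {} then 1 else Min D)"
  have dm: "0 < dm" unfolding dm_def using finD Dpos by auto
  have dmD: "\<And>d. d \<in> D \<Longrightarrow> dm \<le> d" unfolding dm_def using finD by auto
  define w where "w p = 2 * pi * fst p" for p :: "real \<times> real"
  define co where "co p = c p * exp (2 * pi * \<i> * complex_of_real (fst p * \<beta>))" for p :: "real \<times> real"
  define P0 where "P0 = tp F0 w co"
  have P0eq: "(\<Sum>p\<in>F0. c p * MT (fst p) (snd p) f (\<beta> + u)) = P0 u * f u" for u
  proof -
    have "(\<Sum>p\<in>F0. c p * MT (fst p) (snd p) f (\<beta> + u)) = (\<Sum>p\<in>F0. co p * exp (\<i> * complex_of_real (w p * u)) * f u)"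
    proof (rule sum.cong[OF refl])
      fix p assume p: "p \<in> F0"
      then have sp: "snd p = \<beta>" unfolding F0_def by auto
      have "2 * pi * \<i> * complex_of_real (fst p * (\<beta> + u)) =
            2 * pi * \<i> * complex_of_real (fst p * \<beta>) + \<i> * complex_of_real (w p * u)"
        unfolding w_def by (simp add: algebra_simps)
      then have "exp (2 * pi * \<i> * complex_of_real (fst p * (\<beta> + u))) =
           exp (2 * pi * \<i> * complex_of_real (fst p * \<beta>)) * exp (\<i> * complex_of_real (w p * u))"
        by (simp add: exp_add)
      then show "c p * MT (fst p) (snd p) f (\<beta> + u) = co p * exp (\<i> * complex_of_real (w p * u)) * f u"
        unfolding MT_def co_def sp by (simp add: mult_ac)
    qed
    also have "\<dots> = P0 u * f u" unfolding P0_def tp_def by (simp add: sum_distrib_right)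
    finally show ?thesis .
  qed
  have injw: "inj_on w F0"
  proof (rule inj_onI)
    fix p q assume "p \<in> F0" "q \<in> F0" "w p = w q"
    then show "p = q" unfolding F0_def w_def by (auto intro: prod_eqI)
  qed
  have conz: "\<forall>p\<in>F0. co p \<noteq> 0" unfolding co_def F0_def F'_def by auto
  obtain C \<alpha> where al: "0 < \<alpha>" and C: "0 \<le> C" and sub:
    "\<And>a \<epsilon>. 0 < \<epsilon> \<Longrightarrow> \<epsilon> \<le> 1 \<Longrightarrow> measure lborel {y\<in>{a..a+1}. norm (P0 y) < \<epsilon>} \<le> C * \<epsilon> powr \<alpha>"
    using sublevel[OF finF0(1) F0ne injw conz] unfolding P0_def by blast
  define L where "L = LS D"
  define r where "r = card D"
  define K where "K = (real r + 1) / \<alpha>"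
  have K: "0 \<le> K" unfolding K_def using al by simp
  define A where "A = (\<Sum>p\<in>F1. norm (c p))"
  have A: "0 \<le> A" unfolding A_def by (simp add: sum_nonneg)
  have relb: "norm (P0 v) * norm (f v) \<le> A * M"
    if R: "(\<Sum>p\<in>F'. c p * MT (fst p) (snd p) f (\<beta> + v)) = 0" and M: "0 \<le> M"
      and hd: "\<forall>d\<in>D. norm (f (v + d)) \<le> M" for v M
  proof -
    have "(\<Sum>p\<in>F'. c p * MT (fst p) (snd p) f (\<beta> + v)) =
          (\<Sum>p\<in>F0. c p * MT (fst p) (snd p) f (\<beta> + v)) + (\<Sum>p\<in>F1. c p * MT (fst p) (snd p) f (\<beta> + v))"
      unfolding Fsplit(1) by (rule sum.union_disjoint) (use finF0 Fsplit in auto)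
    then have "P0 v * f v = - (\<Sum>p\<in>F1. c p * MT (fst p) (snd p) f (\<beta> + v))"
      using R P0eq[of v] by (simp add: eq_neg_iff_add_eq_0)
    then have "norm (P0 v * f v) \<le> (\<Sum>p\<in>F1. norm (c p * MT (fst p) (snd p) f (\<beta> + v)))"
      by (simp add: norm_sum del: norm_mult)
    also have "\<dots> \<le> (\<Sum>p\<in>F1. norm (c p) * M)"
    proof (rule sum_mono)
      fix p assume p: "p \<in> F1"
      have e: "\<beta> + v - snd p = v + (\<beta> - snd p)" by simp
      have "\<beta> - snd p \<in> D" unfolding D_def using p by auto
      then have "norm (f (v + (\<beta> - snd p))) \<le> M" using hd by blast
      then have "norm (f (\<beta> + v - snd p)) \<le> M" by (subst e)
      then show "norm (c p * MT (fst p) (snd p) f (\<beta> + v)) \<le> norm (c p) * M"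
        unfolding MT_def by (simp add: norm_mult mult_left_mono del: of_real_mult)
    qed
    also have "\<dots> = A * M" unfolding A_def by (simp add: sum_distrib_right)
    finally show ?thesis by (simp add: norm_mult)
  qed
  obtain N where N: "{x \<in> space lborel. \<not> (\<Sum>p\<in>F'. c p * MT (fst p) (snd p) f x) = 0} \<subseteq> N"
    "emeasure lborel N = 0" "N \<in> sets lborel"
    using rel by (rule AE_E)
  define LL where "LL = (\<Union>m. L m)"
  have cLL: "countable LL" unfolding LL_def L_def using finD
    by (intro countable_UN) (auto intro: countable_finite LS_finite)
  define E' where "E' = (\<Union>l\<in>LL. (+) (\<beta> + l) -` N)"
  have E'null: "E' \<in> null_sets lborel"
    unfolding E'_def
  proof (rule null_sets_UN'[OF cLL])
    fix l
    have "N \<in> sets borel" using N(3) by simp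
    then show "(+) (\<beta> + l) -` N \<in> null_sets lborel"
      using emeasure_transl[of N "\<beta> + l"] sets_transl[of N "\<beta> + l"] N(2) by auto
  qed
  have relgood: "(\<Sum>p\<in>F'. c p * MT (fst p) (snd p) f (\<beta> + (l + y))) = 0"
    if "y \<notin> E'" "l \<in> L m" for y l m
  proof -
    have "l \<in> LL" unfolding LL_def using that by auto
    then have "\<beta> + l + y \<notin> N" using that unfolding E'_def by auto
    then show ?thesis using N(1) by (auto simp: add.assoc)
  qed
  define c0 where "c0 = 4 * (K + 1) / dm"
  have c0: "0 < c0" unfolding c0_def using K dm by simp
  have "eventually (\<lambda>x. norm (f x) * exp (c0 * x * ln x) < 1) at_top"
    using order_tendstoD(2)[OF decay[OF c0], of 1] by simp
  then obtain Z where Z: "\<And>z. Z \<le> z \<Longrightarrow> norm (f z) * exp (c0 * z * ln z) < 1"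
    unfolding eventually_at_top_linorder by blast
  have dec: "norm (f z) \<le> exp (- (4 * (K + 1) / dm) * z * ln z)" if "Z \<le> z" for z
  proof -
    have "norm (f z) < 1 / exp (c0 * z * ln z)" using Z[OF that] by (simp add: field_simps)
    also have "1 / exp (c0 * z * ln z) = exp (- (4 * (K + 1) / dm) * z * ln z)"
      unfolding c0_def by (simp add: exp_minus field_simps)
    finally show ?thesis by simp
  qed
  have loc: "AE y in lborel. y \<in> {real_of_int a..real_of_int a + 1} \<longrightarrow> f y = 0" for a :: int
  proof -
    obtain Zs where Zs: "Zs \<in> null_sets lborel" and
      inf: "\<forall>y\<in>{real_of_int a..real_of_int a+1} - Zs. \<forall>M. \<exists>m>M.
           \<forall>l\<in>L m. exp (- ((real r + 1) / \<alpha>) * ln (real m)) \<le> norm (P0 (l + y))"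
      using bad_null[of P0 C \<alpha> L r "real_of_int a", OF _ sub al C] unfolding P0_def L_def r_def
      using tp_cont LS_finite[OF finD] LS_card[OF finD] by blast
    show ?thesis
    proof (rule AE_I'[OF null_sets.Un[OF Zs E'null]])
      show "{y \<in> space lborel. \<not> (y \<in> {real_of_int a..real_of_int a + 1} \<longrightarrow> f y = 0)} \<subseteq> Zs \<union> E'"
      proof
        fix y assume y: "y \<in> {y \<in> space lborel. \<not> (y \<in> {real_of_int a..real_of_int a + 1} \<longrightarrow> f y = 0)}"
        show "y \<in> Zs \<union> E'"
        proof (rule ccontr)
          assume ny: "y \<notin> Zs \<union> E'"
          have "f y = 0"
          proof (rule pointwise_zero[where L=L and D=D and PP=P0 and A=A and K=K and Z=Z and dm=dm])
            show "\<And>j l d. l \<in> L j \<Longrightarrow> d \<in> D \<Longrightarrow> l + d \<in> L (Suc j)"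
              unfolding L_def by (rule LS_step[OF finD])
            show "\<And>j m. j \<le> m \<Longrightarrow> L j \<subseteq> L m" unfolding L_def by (rule LS_mono)
            show "\<And>m. 0 \<in> L m" unfolding L_def by (rule LS_zero)
            show "norm (P0 (l + y)) * norm (f (l + y)) \<le> A * M"
              if "l \<in> L m" "0 \<le> M" "\<forall>d\<in>D. norm (f (l + d + y)) \<le> M" for m l M
            proof (rule relb)
              show "(\<Sum>p\<in>F'. c p * MT (fst p) (snd p) f (\<beta> + (l + y))) = 0"
                using relgood[of y l m] ny that by auto
              show "0 \<le> M" by fact
              show "\<forall>d\<in>D. norm (f (l + y + d)) \<le> M" using that(3) by (simp add: add_ac)
            qed
            show "\<And>M. \<exists>m>M. \<forall>l\<in>L m. exp (- K * ln (real m)) \<le> norm (P0 (l + y))"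
              using inf y ny unfolding K_def by auto
            show "\<And>z. Z \<le> z \<Longrightarrow> norm (f z) \<le> exp (- (4 * (K + 1) / dm) * z * ln z)" by (rule dec)
            show "0 \<le> A" by (rule A)
            show "0 \<le> K" by (rule K)
            show "0 < dm" by (rule dm)
            show "\<And>d. d \<in> D \<Longrightarrow> dm \<le> d" by (rule dmD)
          qed
          then show False using y by auto
        qed
      qed
    qed
  qed
  have "AE y in lborel. \<forall>a\<in>(UNIV :: int set). y \<in> {real_of_int a..real_of_int a + 1} \<longrightarrow> f y = 0"
    by (subst AE_ball_countable) (use loc in auto)
  then have "AE y in lborel. f y = 0"
  proof (rule AE_mp, intro AE_I2 impI)
    fix y assume H: "\<forall>a\<in>(UNIV :: int set). y \<in> {real_of_int a..real_of_int a + 1} \<longrightarrow> f y = 0"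
    have "y \<in> {real_of_int \<lfloor>y\<rfloor>..real_of_int \<lfloor>y\<rfloor> + 1}" by (simp add: less_imp_le)
    then show "f y = 0" using H by blast
  qed
  then have "AE y in lebesgue. f y = 0" by (rule AE_completion)
  then show False using nz by simp
qed


end
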